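(* Let $p$ be a prime number which has Property C, and let $A$ be a sequence of length $4p-4$ over $(\mathbb{Z}/p\mathbb{Z})^2$ that does not contain any zero-sum subsequence of length $p$. Then either $A$ contains an element with multiplicity $p-1$, or all elements of $A$ have multiplicity at most $\frac{p}{2}$.
   Context: Sequences are finite, unordered, and may contain repeated elements; $a^{k}$ denotes $a$ repeated $k$ times, and the multiplicity of an element is the number of times it occurs. A zero-sum subsequence is a subsequence (selection of terms at distinct positions) whose terms sum to $0$. A prime $p$ has Property C if every sequence of length $3p-3$ in $(\mathbb{Z}/p\mathbb{Z})^2$ that does not contain a zero-sum subsequence of length $\le p$ is of the form $a^{p-1}b^{p-1}c^{p-1}$ for some elements $a,b,c$. *)

theory Defs
  imports Main "HOL-Library.Multiset" "HOL-Computational_Algebra.Primes"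
begin

text \<open>Elements of (Z/pZ)^2 are represented by pairs of naturals with both
  components in {0..<p}; sequences are multisets of such pairs.\<close>

definition in_Zp2 :: "nat \<Rightarrow> nat \<times> nat \<Rightarrow> bool" where
  "in_Zp2 p x \<longleftrightarrow> fst x < p \<and> snd x < p"

definition seq_over_Zp2 :: "nat \<Rightarrow> (nat \<times> nat) multiset \<Rightarrow> bool" where
  "seq_over_Zp2 p A \<longleftrightarrow> (\<forall>x \<in># A. in_Zp2 p x)"

definition zero_sum :: "nat \<Rightarrow> (nat \<times> nat) multiset \<Rightarrow> bool" where
  "zero_sum p T \<longleftrightarrow> sum_mset (image_mset fst T) mod p = 0 \<and> sum_mset (image_mset snd T) mod p = 0"

definition property_C :: "nat \<Rightarrow> bool" where
  "property_C p \<longleftrightarrow>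
     (\<forall>S. seq_over_Zp2 p S \<and> size S = 3 * p - 3 \<and>
          \<not> (\<exists>T. T \<subseteq># S \<and> T \<noteq> {#} \<and> size T \<le> p \<and> zero_sum p T)
        \<longrightarrow> (\<exists>a b c. S = replicate_mset (p - 1) a + replicate_mset (p - 1) b + replicate_mset (p - 1) c))"

end

theory Submission
  imports Defs
begin

definition tr :: "nat \<Rightarrow> nat \<times> nat \<Rightarrow> nat \<times> nat \<Rightarrow> nat \<times> nat" where
  "tr p c x = ((fst x + fst c) mod p, (snd x + snd c) mod p)"

definition ng :: "nat \<Rightarrow> nat \<times> nat \<Rightarrow> nat \<times> nat" where
  "ng p c = ((p - fst c) mod p, (p - snd c) mod p)"

lemma mod_inv_aux:
  fixes y x p :: nat
  assumes "y < p" "x < p"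
  shows "((y + (p - x) mod p) mod p + x) mod p = y"
proof -
  have "((y + (p - x) mod p) mod p + x) mod p = (y + (p - x) + x) mod p"
    by (metis mod_add_left_eq mod_add_right_eq)
  also have "y + (p - x) + x = y + p" using assms by simp
  finally show ?thesis using assms by simp
qed

lemma tr_ng: "in_Zp2 p y \<Longrightarrow> in_Zp2 p x \<Longrightarrow> tr p x (tr p (ng p x) y) = y"
  unfolding tr_def ng_def in_Zp2_def by (simp add: mod_inv_aux prod_eq_iff)

lemma tr_in: "0 < p \<Longrightarrow> in_Zp2 p (tr p c x)"
  unfolding tr_def in_Zp2_def by simp

lemma sum_fst_tr:
  "sum_mset (image_mset (\<lambda>z. fst (tr p c z)) T) mod p = (sum_mset (image_mset fst T) + size T * fst c) mod p"
proof (induction T)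
  case empty then show ?case by simp
next
  case (add x T)
  have "sum_mset (image_mset (\<lambda>z. fst (tr p c z)) (add_mset x T)) mod p
      = ((fst x + fst c) mod p + sum_mset (image_mset (\<lambda>z. fst (tr p c z)) T)) mod p"
    by (simp add: tr_def)
  also have "\<dots> = ((fst x + fst c) + sum_mset (image_mset (\<lambda>z. fst (tr p c z)) T) mod p) mod p"
    by (metis mod_add_left_eq mod_add_right_eq)
  also have "\<dots> = ((fst x + fst c) + (sum_mset (image_mset fst T) + size T * fst c)) mod p"
    using add.IH by (metis mod_add_right_eq)
  finally show ?case by (simp add: algebra_simps)
qed

lemma sum_snd_tr:
  "sum_mset (image_mset (\<lambda>z. snd (tr p c z)) T) mod p = (sum_mset (image_mset snd T) + size T * snd c) mod p"
proof (induction T)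
  case empty then show ?case by simp
next
  case (add x T)
  have "sum_mset (image_mset (\<lambda>z. snd (tr p c z)) (add_mset x T)) mod p
      = ((snd x + snd c) mod p + sum_mset (image_mset (\<lambda>z. snd (tr p c z)) T)) mod p"
    by (simp add: tr_def)
  also have "\<dots> = ((snd x + snd c) + sum_mset (image_mset (\<lambda>z. snd (tr p c z)) T) mod p) mod p"
    by (metis mod_add_left_eq mod_add_right_eq)
  also have "\<dots> = ((snd x + snd c) + (sum_mset (image_mset snd T) + size T * snd c)) mod p"
    using add.IH by (metis mod_add_right_eq)
  finally show ?case by (simp add: algebra_simps)
qed

lemma zero_sum_tr:
  assumes "size T = p"
  shows "zero_sum p (image_mset (tr p c) T) \<longleftrightarrow> zero_sum p T"
proof -
  have 1: "image_mset fst (image_mset (tr p c) T) = image_mset (\<lambda>z. fst (tr p c z)) T"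
    by (simp add: image_mset.compositionality comp_def)
  have 2: "image_mset snd (image_mset (tr p c) T) = image_mset (\<lambda>z. snd (tr p c z)) T"
    by (simp add: image_mset.compositionality comp_def)
  show ?thesis unfolding zero_sum_def 1 2 sum_fst_tr sum_snd_tr using assms
    by simp
qed

lemma zero_sum_add: "zero_sum p U \<Longrightarrow> zero_sum p V \<Longrightarrow> zero_sum p (U + V)"
  unfolding zero_sum_def by (simp add: mod_add_eq[symmetric])

lemma zero_sum_pad: "zero_sum p V \<Longrightarrow> zero_sum p (V + replicate_mset j (0,0))"
  unfolding zero_sum_def by simp

lemma zero_sum_rep: "zero_sum p (replicate_mset p y)"
  unfolding zero_sum_def by simp

lemma exists_sub: "n \<le> size R \<Longrightarrow> \<exists>T. T \<subseteq># R \<and> size T = n"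
proof (induction R arbitrary: n)
  case empty then show ?case by simp
next
  case (add x R)
  show ?case
  proof (cases "n \<le> size R")
    case True
    then obtain T where "T \<subseteq># R" "size T = n" using add.IH by blast
    moreover have "R \<subseteq># add_mset x R" by (metis add_mset_add_single mset_subset_eq_add_left)
    ultimately show ?thesis using subset_mset.order_trans by blast
  next
    case False
    then have "n = size (add_mset x R)" using add.prems by simp
    then show ?thesis by blast
  qed
qed


lemma count_rep_sub: "replicate_mset (count A y) y \<subseteq># A"
  by (simp add: mset_subset_eqI)

lemma rep_sub_count: "replicate_mset n y \<subseteq># A \<Longrightarrow> n \<le> count A y"
  by (metis count_replicate_mset mset_subset_eq_count)

lemma tr_ng_self: "in_Zp2 p x \<Longrightarrow> tr p (ng p x) x = (0,0)"
proof -
  have aux: "(y + (p - y) mod p) mod p = 0" if "y < p" for y :: nat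
  proof -
    have "(y + (p - y) mod p) mod p = (y + (p - y)) mod p" by (metis mod_add_right_eq)
    also have "y + (p - y) = p" using that by simp
    finally show ?thesis by simp
  qed
  assume "in_Zp2 p x"
  then show ?thesis unfolding tr_def ng_def in_Zp2_def by (simp add: aux)
qed

lemma rep_subI: "n \<le> k \<Longrightarrow> replicate_mset n z \<subseteq># replicate_mset k z"
  by (simp add: subseteq_mset_def)


lemma core:
  assumes p: "prime p" and C: "property_C p" and S: "seq_over_Zp2 p A"
    and sz: "size A = 4 * p - 4"
    and nz: "\<not> (\<exists>T. T \<subseteq># A \<and> size T = p \<and> zero_sum p T)"
    and kk: "p < 2 * count A (0,0)" and cnt: "\<forall>y. count A y \<le> p - 2"
  shows False
proof -
  define z where "z = ((0::nat),(0::nat))"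
  define k where "k = count A z"
  define B where "B = {#x \<in># A. x \<noteq> z#}"
  define m where "m = p - k"
  have p2: "p \<ge> 2" using p prime_ge_2_nat by blast
  have kle: "k \<le> p - 2" using cnt k_def by blast
  have kgt: "p < 2 * k" using kk k_def z_def by simp
  have m2: "m \<ge> 2" "2 * m < p" using kle kgt p2 m_def by auto
  have "{#x \<in># A. \<not> x \<noteq> z#} = replicate_mset k z"
    by (simp add: filter_eq_replicate_mset k_def)
  then have AB: "A = B + replicate_mset k z"
    using multiset_partition[of A "\<lambda>x. x \<noteq> z"] unfolding B_def by simp
  have "size A = size B + k" by (subst AB) simp
  then have szB: "size B = 4 * p - 4 - k" using sz by simp
  have BA: "B \<subseteq># A" using AB by simp
  have pad: False if V: "V \<subseteq># B" "zero_sum p V" "m \<le> size V" "size V \<le> p" for V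
  proof -
    have "V + replicate_mset (p - size V) z \<subseteq># B + replicate_mset k z"
      by (rule subset_mset.add_mono[OF V(1) rep_subI]) (use V(3) m_def in auto)
    moreover have "size (V + replicate_mset (p - size V) z) = p" using V(4) by simp
    moreover have "zero_sum p (V + replicate_mset (p - size V) z)"
      using zero_sum_pad[OF V(2)] z_def by simp
    ultimately show False using nz AB by metis
  qed
  have main: False if "U \<subseteq># B" "zero_sum p U" "size U < m" for U
    using that
  proof (induction "m - size U" arbitrary: U rule: less_induct)
    case less
    define R where "R = B - U"
    have szR: "size R \<ge> 3 * p - 3"
      using size_Diff_submset[OF less.prems(1)] szB less.prems(3) m_def kle R_def by simp
    obtain T where T: "T \<subseteq># R" "size T = 3 * p - 3" using exists_sub[OF szR] by blast
    have TB: "T \<subseteq># B" using subset_mset.order_trans[OF T(1)] R_def by simp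
    have TA: "T \<subseteq># A" using subset_mset.order_trans[OF TB BA] .
    have ST: "seq_over_Zp2 p T" unfolding seq_over_Zp2_def
    proof (rule ballI)
      fix x assume "x \<in># T"
      then have "x \<in># A" by (rule mset_subset_eqD[OF TA])
      then show "in_Zp2 p x" using S unfolding seq_over_Zp2_def by blast
    qed
    show False
    proof (cases "\<exists>V. V \<subseteq># T \<and> V \<noteq> {#} \<and> size V \<le> p \<and> zero_sum p V")
      case False
      then obtain a b c where "T = replicate_mset (p - 1) a + replicate_mset (p - 1) b + replicate_mset (p - 1) c"
        using C ST T(2) unfolding property_C_def by blast
      then have "replicate_mset (p - 1) a \<subseteq># A" using TA subset_mset.order_trans[OF _ TA] by simp
      then have "p - 1 \<le> count A a" by (rule rep_sub_count)
      moreover have "count A a \<le> p - 2" using cnt by blast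
      ultimately show False using p2 by arith
    next
      case True
      then obtain V where V: "V \<subseteq># T" "V \<noteq> {#}" "size V \<le> p" "zero_sum p V" by blast
      have VB: "V \<subseteq># B" using subset_mset.order_trans[OF V(1) TB] .
      show False
      proof (cases "m \<le> size V")
        case True then show False using pad VB V by blast
      next
        case False
        have VR: "V \<subseteq># B - U" using subset_mset.order_trans[OF V(1) T(1)] R_def by simp
        have UV: "U + V \<subseteq># B"
          using subset_mset.add_left_mono[OF VR, of U] subset_mset.add_diff_inverse[OF less.prems(1)] by simp
        have zUV: "zero_sum p (U + V)" using zero_sum_add less.prems(2) V(4) by blast
        have sV: "size V \<ge> 1" using V(2) by (simp add: Suc_leI nonempty_has_size)
        show False
        proof (cases "m \<le> size (U + V)")
          case True
          then show False using pad[OF UV zUV] False less.prems(3) m2 by simp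
        next
          case F2: False
          show False
            by (rule less.hyps[OF _ UV zUV]) (use F2 sV less.prems(3) in auto)
        qed
      qed
    qed
  qed
  show False by (rule main[of "{#}"]) (use m2 in \<open>auto simp: zero_sum_def\<close>)
qed


theorem lemma2p1:
  fixes p :: nat and A :: "(nat \<times> nat) multiset"
  assumes "prime p"
    and "property_C p"
    and "seq_over_Zp2 p A"
    and "size A = 4 * p - 4"
    and "\<not> (\<exists>T. T \<subseteq># A \<and> size T = p \<and> zero_sum p T)"
  shows "(\<exists>x \<in># A. count A x = p - 1) \<or> (\<forall>x \<in># A. 2 * count A x \<le> p)"
proof (rule ccontr)
  assume neg: "\<not> ?thesis"
  then have no1: "\<And>y. y \<in># A \<Longrightarrow> count A y \<noteq> p - 1" by blast
  from neg obtain x where x: "x \<in># A" "p < 2 * count A x" by (meson not_le)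
  have p2: "p \<ge> 2" using assms(1) prime_ge_2_nat by blast
  have cnt: "\<forall>y. count A y \<le> p - 2"
  proof
    fix y
    show "count A y \<le> p - 2"
    proof (rule ccontr)
      assume "\<not> count A y \<le> p - 2"
      then have c: "count A y \<ge> p - 1" by arith
      then have "count A y > 0" using p2 by arith
      then have "y \<in># A" by simp
      then have "count A y \<noteq> p - 1" by (rule no1)
      with c have "count A y \<ge> p" by arith
      then have "replicate_mset p y \<subseteq># A"
        by (simp add: subseteq_mset_def)
      then show False using assms(5) zero_sum_rep by fastforce
    qed
  qed
  have xZ: "in_Zp2 p x" using assms(3) x(1) unfolding seq_over_Zp2_def by blast
  define A' where "A' = image_mset (tr p (ng p x)) A"
  have bk: "image_mset (tr p x) A' = A"
  proof -
    have "image_mset (tr p x) A' = image_mset (\<lambda>y. tr p x (tr p (ng p x) y)) A"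
      unfolding A'_def by (simp add: image_mset.compositionality comp_def)
    also have "\<dots> = image_mset (\<lambda>y. y) A"
      by (rule image_mset_cong) (use assms(3) xZ tr_ng in \<open>auto simp: seq_over_Zp2_def\<close>)
    finally show ?thesis by simp
  qed
  have S': "seq_over_Zp2 p A'" unfolding A'_def seq_over_Zp2_def using tr_in p2 by auto
  have sz': "size A' = 4 * p - 4" unfolding A'_def using assms(4) by simp
  have nz': "\<not> (\<exists>T. T \<subseteq># A' \<and> size T = p \<and> zero_sum p T)"
  proof
    assume "\<exists>T. T \<subseteq># A' \<and> size T = p \<and> zero_sum p T"
    then obtain T where T: "T \<subseteq># A'" "size T = p" "zero_sum p T" by blast
    have "image_mset (tr p x) T \<subseteq># A" using image_mset_subseteq_mono[OF T(1), of "tr p x"] unfolding bk .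
    moreover have "size (image_mset (tr p x) T) = p" using T(2) by simp
    moreover have "zero_sum p (image_mset (tr p x) T)" using zero_sum_tr[OF T(2)] T(3) by simp
    ultimately show False using assms(5) by blast
  qed
  have "replicate_mset (count A x) (tr p (ng p x) x) \<subseteq># A'"
    unfolding A'_def using image_mset_subseteq_mono[OF count_rep_sub[of A x], of "tr p (ng p x)"] by simp
  then have "count A x \<le> count A' (0,0)" unfolding tr_ng_self[OF xZ] by (rule rep_sub_count)
  then have kk': "p < 2 * count A' (0,0)" using x(2) by linarith
  have cnt': "\<forall>y. count A' y \<le> p - 2"
  proof
    fix y
    have "image_mset (tr p x) (replicate_mset (count A' y) y) \<subseteq># A"
      using image_mset_subseteq_mono[OF count_rep_sub[of A' y], of "tr p x"] unfolding bk .
    then have "replicate_mset (count A' y) (tr p x y) \<subseteq># A" by simp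
    then have "count A' y \<le> count A (tr p x y)" by (rule rep_sub_count)
    then show "count A' y \<le> p - 2" using cnt by (meson le_trans)
  qed
  show False using core[OF assms(1,2) S' sz' nz' kk' cnt'] .
qed

end
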